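(* Let $k\ge2$ and let $B=M\cup\{\omega\}$ where $\omega\in P_k\setminus M$ has $q\ge 1$ arguments. Let $s,m,n\ge 1$, and for each $i=1,\ldots,s$ let $F_i=\{f_{i1},\ldots,f_{im}\}$ be a system of $m$ functions from $P_k(n)$. Then there exist functions $g_1,\ldots,g_m\in P_k(s+n)$ such that for every $j=1,\ldots,m$ the function $g_j$ is an $s$-connector for the tuple $(f_{1j},\ldots,f_{sj})$, and $$I_B(\{g_1,\ldots,g_m\})\le\max\{I_B(F_1),\ldots,I_B(F_s)\}.$$
   Context: Let $k\ge 2$ be an integer and $E_k=\{0,1,\ldots,k-1\}$. $P_k(n)$ denotes the set of all functions $E_k^n\to E_k$, and $P_k=\bigcup_n P_k(n)$. Tuples are ordered componentwise. A function $f$ is monotone if $\tilde\alpha\le\tilde\beta$ implies $f(\tilde\alpha)\le f(\tilde\beta)$; $M$ is the set of all monotone functions in $P_k$ (of all arities, including constants). A basis is a set $B=M\cup\{\omega_1,\ldots,\omega_p\}$ with $p\ge1$ and $\omega_i\in P_k\setminus M$. A circuit over $B$ with inputs $x_1,\ldots,x_n$ is a finite directed acyclic graph whose source nodes are labelled by the variables $x_1,\ldots,x_n$ and each of whose other nodes (gates) is labelled by a $q$-ary function from $B$ and has $q$ ordered incoming edges; each node computes a function of $P_k(n)$ in the obvious way. A circuit realizes a system $F$ of functions of $x_1,\ldots,x_n$ if every function of $F$ is computed at some node. Gates labelled by functions of $M$ have weight $0$, gates labelled by some $\omega_i$ have weight $1$. The non-monotone complexity $I_B(S)$ of a circuit $S$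 is the sum of the weights of its gates; $I_B(F)$ is the minimum of $I_B(S)$ over all circuits $S$ over $B$ realizing $F$. For functions $f_1,\ldots,f_s\in P_k(n)$, an $s$-connector for the tuple $(f_1,\ldots,f_s)$ is a function $g(z_1,\ldots,z_s,x_1,\ldots,x_n)\in P_k(s+n)$ such that for each $i=1,\ldots,s$ and all $(x_1,\ldots,x_n)\in E_k^n$, $g(\tilde e_i,x_1,\ldots,x_n)=f_i(x_1,\ldots,x_n)$, where $\tilde e_i\in E_k^s$ is the tuple with $1$ in position $i$ and $0$ elsewhere. *)

theory Defs
  imports Main
begin

text \<open>A function of P_k(n) is represented as a HOL function on lists of naturals;
only its values on E_k^n (lists of length n with entries < k) matter.\<close>

definition tuples :: "nat \<Rightarrow> nat \<Rightarrow> nat list set" where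
  "tuples k n = {xs. length xs = n \<and> set xs \<subseteq> {..<k}}"

definition in_Pk :: "nat \<Rightarrow> nat \<Rightarrow> (nat list \<Rightarrow> nat) \<Rightarrow> bool" where
  "in_Pk k n f \<longleftrightarrow> (\<forall>xs\<in>tuples k n. f xs < k)"

definition monotone_fn :: "nat \<Rightarrow> nat \<Rightarrow> (nat list \<Rightarrow> nat) \<Rightarrow> bool" where
  "monotone_fn k n f \<longleftrightarrow> in_Pk k n f \<and>
     (\<forall>xs\<in>tuples k n. \<forall>ys\<in>tuples k n. list_all2 (\<le>) xs ys \<longrightarrow> f xs \<le> f ys)"

datatype gate_lab = Mono "nat list \<Rightarrow> nat" | Omega

type_synonym circuit = "(gate_lab \<times> nat list) list"

fun lab_apply :: "(nat list \<Rightarrow> nat) \<Rightarrow> gate_lab \<Rightarrow> nat list \<Rightarrow> nat" where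
  "lab_apply \<omega> (Mono h) ys = h ys"
| "lab_apply \<omega> Omega ys = \<omega> ys"

text \<open>Nodes 0..n-1 are the inputs x_1..x_n; node n+j is gate j. Each gate only reads earlier nodes.\<close>
definition eval_circ :: "(nat list \<Rightarrow> nat) \<Rightarrow> circuit \<Rightarrow> nat list \<Rightarrow> nat list" where
  "eval_circ \<omega> C xs =
     foldl (\<lambda>vals (l, args). vals @ [lab_apply \<omega> l (map ((!) vals) args)]) xs C"

definition wf_circ :: "nat \<Rightarrow> nat \<Rightarrow> nat \<Rightarrow> circuit \<Rightarrow> bool" where
  "wf_circ k q n C \<longleftrightarrow> (\<forall>j<length C.
     (\<forall>i\<in>set (snd (C ! j)). i < n + j) \<and>
     (case fst (C ! j) of Mono h \<Rightarrow> monotone_fn k (length (snd (C ! j))) h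
                        | Omega \<Rightarrow> length (snd (C ! j)) = q))"

definition realizes :: "nat \<Rightarrow> nat \<Rightarrow> (nat list \<Rightarrow> nat) \<Rightarrow> circuit \<Rightarrow> (nat list \<Rightarrow> nat) set \<Rightarrow> bool" where
  "realizes k n \<omega> C F \<longleftrightarrow>
     (\<forall>f\<in>F. \<exists>i<n + length C. \<forall>xs\<in>tuples k n. eval_circ \<omega> C xs ! i = f xs)"

fun is_omega :: "gate_lab \<Rightarrow> bool" where
  "is_omega Omega = True"
| "is_omega (Mono _) = False"

definition omega_count :: "circuit \<Rightarrow> nat" where
  "omega_count C = length (filter (\<lambda>g. is_omega (fst g)) C)"

definition I_B :: "nat \<Rightarrow> nat \<Rightarrow> (nat list \<Rightarrow> nat) \<Rightarrow> nat \<Rightarrow> (nat list \<Rightarrow> nat) set \<Rightarrow> nat" where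
  "I_B k q \<omega> n F = (LEAST c. \<exists>C. wf_circ k q n C \<and> realizes k n \<omega> C F \<and> omega_count C = c)"

definition unit_tuple :: "nat \<Rightarrow> nat \<Rightarrow> nat list" where
  "unit_tuple s i = map (\<lambda>l. if l = i then 1 else 0) [1..<s+1]"

definition connector :: "nat \<Rightarrow> nat \<Rightarrow> nat \<Rightarrow> (nat list \<Rightarrow> nat) \<Rightarrow> (nat \<Rightarrow> nat list \<Rightarrow> nat) \<Rightarrow> bool" where
  "connector k s n g f \<longleftrightarrow>
     (\<forall>i\<in>{1..s}. \<forall>xs\<in>tuples k n. g (unit_tuple s i @ xs) = f i xs)"

end

theory Submission
  imports Defs
begin
lemma eval_nil[simp]: "eval_circ \<omega> [] vals = vals"
  by (simp add: eval_circ_def)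

lemma eval_cons[simp]: "eval_circ \<omega> ((l,a)#C) vals = eval_circ \<omega> C (vals @ [lab_apply \<omega> l (map ((!) vals) a)])"
  by (simp add: eval_circ_def)

lemma eval_app: "eval_circ \<omega> (C1 @ C2) vals = eval_circ \<omega> C2 (eval_circ \<omega> C1 vals)"
  by (simp add: eval_circ_def)

lemma eval_len: "length (eval_circ \<omega> C vals) = length vals + length C"
  by (induction C arbitrary: vals) auto

lemma eval_prefix: "p < length vals \<Longrightarrow> eval_circ \<omega> C vals ! p = vals ! p"
  by (induction C arbitrary: vals) (auto simp: nth_append)

lemma oc_nil[simp]: "omega_count [] = 0"
  and oc_mono[simp]: "omega_count ((Mono h, a) # C) = omega_count C"
  and oc_om[simp]: "omega_count ((Omega, a) # C) = Suc (omega_count C)"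
  and oc_app: "omega_count (C1 @ C2) = omega_count C1 + omega_count C2"
  by (auto simp: omega_count_def)

lemma wf_cons: "wf_circ k q b ((l,a)#C) \<longleftrightarrow> (\<forall>i\<in>set a. i < b) \<and>
   (case l of Mono h \<Rightarrow> monotone_fn k (length a) h | Omega \<Rightarrow> length a = q) \<and> wf_circ k q (Suc b) C"
  unfolding wf_circ_def by (simp only: length_Cons All_less_Suc2 nth_Cons_0 nth_Cons_Suc fst_conv snd_conv) auto

definition hd0 :: "nat list \<Rightarrow> nat" where "hd0 ys = (case ys of [] \<Rightarrow> 0 | y # _ \<Rightarrow> y)"

fun evo :: "circuit \<Rightarrow> nat list \<Rightarrow> nat list \<Rightarrow> nat list" where
  "evo [] ys vals = vals"
| "evo ((Mono h, a) # C) ys vals = evo C ys (vals @ [h (map ((!) vals) a)])"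
| "evo ((Omega, a) # C) ys vals = evo C (tl ys) (vals @ [hd0 ys])"

fun oargs :: "circuit \<Rightarrow> nat list \<Rightarrow> nat list \<Rightarrow> nat list list" where
  "oargs [] ys vals = []"
| "oargs ((Mono h, a) # C) ys vals = oargs C ys (vals @ [h (map ((!) vals) a)])"
| "oargs ((Omega, a) # C) ys vals = map ((!) vals) a # oargs C (tl ys) (vals @ [hd0 ys])"

fun tom :: "(nat list \<Rightarrow> nat) \<Rightarrow> circuit \<Rightarrow> nat list \<Rightarrow> nat list" where
  "tom \<omega> [] vals = []"
| "tom \<omega> ((Mono h, a) # C) vals = tom \<omega> C (vals @ [h (map ((!) vals) a)])"
| "tom \<omega> ((Omega, a) # C) vals = \<omega> (map ((!) vals) a) # tom \<omega> C (vals @ [\<omega> (map ((!) vals) a)])"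

lemma tom_evo: "evo C (tom \<omega> C vals) vals = eval_circ \<omega> C vals"
  by (induction \<omega> C vals rule: tom.induct) (auto simp: hd0_def)

lemma tom_oargs: "map \<omega> (oargs C (tom \<omega> C vals) vals) = tom \<omega> C vals"
  by (induction \<omega> C vals rule: tom.induct) (auto simp: hd0_def)

lemma oargs_len: "length (oargs C ys vals) = omega_count C"
  by (induction C ys vals rule: oargs.induct) auto

lemma tom_len: "length (tom \<omega> C vals) = omega_count C"
  by (induction \<omega> C vals rule: tom.induct) auto

lemma evo_len: "length (evo C ys vals) = length vals + length C"
  by (induction C ys vals rule: evo.induct) auto

lemma take_Suc_hd0: "take (Suc t) ys = take (Suc t) ys' \<Longrightarrow> hd0 ys = hd0 ys' \<and> take t (tl ys) = take t (tl ys')"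
  by (cases ys; cases ys'; auto simp: hd0_def)

lemma evo_prefix: "take (omega_count C) ys = take (omega_count C) ys' \<Longrightarrow> evo C ys vals = evo C ys' vals"
proof (induction C arbitrary: ys ys' vals)
  case Nil thus ?case by simp
next
  case (Cons g C)
  obtain l a where g: "g = (l,a)" by (cases g) blast
  show ?case
  proof (cases l)
    case (Mono h) thus ?thesis using Cons.IH[of ys ys' "vals @ [h (map ((!) vals) a)]"] Cons.prems g by simp
  next
    case Omega
    with Cons.prems g have "take (Suc (omega_count C)) ys = take (Suc (omega_count C)) ys'" by simp
    from take_Suc_hd0[OF this] Cons.IH[of "tl ys" "tl ys'" "vals @ [hd0 ys]"] Omega g show ?thesis by simp
  qed
qed

lemma oargs_prefix: "take t ys = take t ys' \<Longrightarrow> take (Suc t) (oargs C ys vals) = take (Suc t) (oargs C ys' vals)"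
proof (induction C arbitrary: ys ys' vals t)
  case Nil thus ?case by simp
next
  case (Cons g C)
  obtain l a where g: "g = (l,a)" by (cases g) blast
  show ?case
  proof (cases l)
    case (Mono h) thus ?thesis using Cons.IH[where ys=ys and ys'=ys' and vals="vals @ [h (map ((!) vals) a)]" and t=t] Cons.prems g by simp
  next
    case Omega
    show ?thesis
    proof (cases t)
      case 0 thus ?thesis using Omega g by simp
    next
      case (Suc t')
      with Cons.prems have "take (Suc t') ys = take (Suc t') ys'" by simp
      from take_Suc_hd0[OF this] Cons.IH[where ys="tl ys" and ys'="tl ys'" and vals="vals @ [hd0 ys]" and t=t'] Omega g Suc show ?thesis by simp
    qed
  qed
qed

lemma nth_bound: "set vals \<subseteq> {..<k} \<Longrightarrow> p < length vals \<Longrightarrow> vals ! p < k"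
  by (metis lessThan_iff nth_mem subsetD)

lemma map_nth_bound: "set vals \<subseteq> {..<k} \<Longrightarrow> \<forall>p\<in>set a. p < length vals \<Longrightarrow> set (map ((!) vals) a) \<subseteq> {..<k}"
  by (auto intro!: nth_bound)

lemma gate_bound:
  assumes "monotone_fn k (length a) h" "\<forall>p\<in>set a. p < length vals" "set vals \<subseteq> {..<k}"
  shows "h (map ((!) vals) a) < k"
proof -
  have "map ((!) vals) a \<in> tuples k (length a)"
    using assms(2,3) by (auto simp: tuples_def intro: nth_bound)
  thus ?thesis using assms(1) by (auto simp: monotone_fn_def in_Pk_def)
qed

lemma gate_mono:
  assumes "monotone_fn k (length a) h" "\<forall>p\<in>set a. p < length vals" "set vals \<subseteq> {..<k}"
    "set vals' \<subseteq> {..<k}" "list_all2 (\<le>) vals vals'"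
  shows "h (map ((!) vals) a) \<le> h (map ((!) vals') a)"
proof -
  have l: "length vals' = length vals" using assms(5) by (simp add: list_all2_lengthD)
  have "map ((!) vals) a \<in> tuples k (length a)" "map ((!) vals') a \<in> tuples k (length a)"
    using assms(2,3,4) l by (auto simp: tuples_def intro: nth_bound)
  moreover have "list_all2 (\<le>) (map ((!) vals) a) (map ((!) vals') a)"
    using assms(2,5) by (auto simp: list_all2_conv_all_nth)
  ultimately show ?thesis using assms(1) by (auto simp: monotone_fn_def)
qed

lemma hd0_bound: "0 < k \<Longrightarrow> set ys \<subseteq> {..<k} \<Longrightarrow> hd0 ys < k"
  by (cases ys) (auto simp: hd0_def)

lemma tl_bound: "set ys \<subseteq> A \<Longrightarrow> set (tl ys) \<subseteq> A"
  by (cases ys) auto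

lemma hd0_mono: "list_all2 (\<le>) ys ys' \<Longrightarrow> hd0 ys \<le> hd0 ys'"
  by (cases ys; cases ys') (auto simp: hd0_def)

lemma tl_mono: "list_all2 (\<le>) ys ys' \<Longrightarrow> list_all2 (\<le>) (tl ys) (tl ys')"
  by (cases ys; cases ys') auto

lemma evo_bound:
  "wf_circ k q (length vals) C \<Longrightarrow> 0 < k \<Longrightarrow> set vals \<subseteq> {..<k} \<Longrightarrow> set ys \<subseteq> {..<k}
   \<Longrightarrow> set (evo C ys vals) \<subseteq> {..<k}"
proof (induction C ys vals rule: evo.induct)
  case (1 ys vals) thus ?case by simp
next
  case (2 h a C ys vals)
  hence "h (map ((!) vals) a) < k" using gate_bound by (auto simp: wf_cons)
  thus ?case using 2 by (auto simp: wf_cons)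
next
  case (3 a C ys vals)
  thus ?case using hd0_bound[of k ys] tl_bound[of ys] by (auto simp: wf_cons)
qed

lemma oargs_bound:
  "wf_circ k q (length vals) C \<Longrightarrow> 0 < k \<Longrightarrow> set vals \<subseteq> {..<k} \<Longrightarrow> set ys \<subseteq> {..<k}
   \<Longrightarrow> as \<in> set (oargs C ys vals) \<Longrightarrow> set as \<subseteq> {..<k} \<and> length as = q"
proof (induction C ys vals rule: oargs.induct)
  case (1 ys vals) thus ?case by simp
next
  case (2 h a C ys vals)
  hence "h (map ((!) vals) a) < k" using gate_bound by (auto simp: wf_cons)
  thus ?case using 2 by (auto simp: wf_cons)
next
  case (3 a C ys vals)
  have wf: "\<forall>i\<in>set a. i < length vals" "length a = q" "wf_circ k q (Suc (length vals)) C"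
    using 3(2) by (auto simp: wf_cons)
  have m: "set (map ((!) vals) a) \<subseteq> {..<k}" using map_nth_bound[OF 3(4) wf(1)] .
  show ?case
  proof (cases "as = map ((!) vals) a")
    case True thus ?thesis using m wf by simp
  next
    case False
    hence "as \<in> set (oargs C (tl ys) (vals @ [hd0 ys]))" using 3(6) by simp
    thus ?thesis using 3 wf hd0_bound[of k ys] tl_bound[of ys] by simp
  qed
qed

lemma evo_mono:
  "wf_circ k q (length vals) C \<Longrightarrow> 0 < k \<Longrightarrow> set vals \<subseteq> {..<k} \<Longrightarrow> set ys \<subseteq> {..<k}
   \<Longrightarrow> set vals' \<subseteq> {..<k} \<Longrightarrow> set ys' \<subseteq> {..<k}
   \<Longrightarrow> list_all2 (\<le>) vals vals' \<Longrightarrow> list_all2 (\<le>) ys ys'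
   \<Longrightarrow> list_all2 (\<le>) (evo C ys vals) (evo C ys' vals')"
proof (induction C ys vals arbitrary: ys' vals' rule: evo.induct)
  case (1 ys vals) thus ?case by simp
next
  case (2 h a C ys vals)
  have l: "length vals' = length vals" using 2(8) by (simp add: list_all2_lengthD)
  have "h (map ((!) vals) a) < k" "h (map ((!) vals') a) < k"
    using gate_bound 2 l by (auto simp: wf_cons)
  moreover have "h (map ((!) vals) a) \<le> h (map ((!) vals') a)"
    using gate_mono 2 by (auto simp: wf_cons)
  ultimately show ?case by simp (rule 2(1), use 2 l in \<open>auto simp: wf_cons intro!: list_all2_appendI\<close>)
next
  case (3 a C ys vals)
  have l: "length vals' = length vals" using 3(8) by (simp add: list_all2_lengthD)
  show ?case using 3 l hd0_bound[of k ys] tl_bound[of ys] hd0_bound[of k ys'] tl_bound[of ys']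
      hd0_mono[OF 3(9)] tl_mono[OF 3(9)]
    by simp (rule 3(1), auto simp: wf_cons intro!: list_all2_appendI)
qed

lemma oargs_mono:
  "wf_circ k q (length vals) C \<Longrightarrow> 0 < k \<Longrightarrow> set vals \<subseteq> {..<k} \<Longrightarrow> set ys \<subseteq> {..<k}
   \<Longrightarrow> set vals' \<subseteq> {..<k} \<Longrightarrow> set ys' \<subseteq> {..<k}
   \<Longrightarrow> list_all2 (\<le>) vals vals' \<Longrightarrow> list_all2 (\<le>) ys ys'
   \<Longrightarrow> list_all2 (list_all2 (\<le>)) (oargs C ys vals) (oargs C ys' vals')"
proof (induction C ys vals arbitrary: ys' vals' rule: oargs.induct)
  case (1 ys vals) thus ?case by simp
next
  case (2 h a C ys vals)
  have l: "length vals' = length vals" using 2(8) by (simp add: list_all2_lengthD)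
  have "h (map ((!) vals) a) < k" "h (map ((!) vals') a) < k"
    using gate_bound 2 l by (auto simp: wf_cons)
  moreover have "h (map ((!) vals) a) \<le> h (map ((!) vals') a)"
    using gate_mono 2 by (auto simp: wf_cons)
  ultimately show ?case by simp (rule 2(1), use 2 l in \<open>auto simp: wf_cons intro!: list_all2_appendI\<close>)
next
  case (3 a C ys vals)
  have l: "length vals' = length vals" using 3(8) by (simp add: list_all2_lengthD)
  have m: "list_all2 (\<le>) (map ((!) vals) a) (map ((!) vals') a)"
    using 3 l by (auto simp: wf_cons list_all2_conv_all_nth)
  show ?case using 3 l hd0_bound[of k ys] tl_bound[of ys] hd0_bound[of k ys'] tl_bound[of ys']
      hd0_mono[OF 3(9)] tl_mono[OF 3(9)] m
    by simp (rule 3(1), auto simp: wf_cons intro!: list_all2_appendI)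
qed

lemma eval_bound:
  "wf_circ k q (length vals) C \<Longrightarrow> in_Pk k q \<omega> \<Longrightarrow> set vals \<subseteq> {..<k}
   \<Longrightarrow> set (eval_circ \<omega> C vals) \<subseteq> {..<k}"
proof (induction C arbitrary: vals)
  case Nil thus ?case by simp
next
  case (Cons g C)
  obtain l a where g: "g = (l,a)" by (cases g) blast
  have "lab_apply \<omega> l (map ((!) vals) a) < k"
  proof (cases l)
    case (Mono h) thus ?thesis using Cons g gate_bound by (auto simp: wf_cons)
  next
    case Omega
    have "map ((!) vals) a \<in> tuples k q" using Cons g Omega by (auto simp: wf_cons tuples_def intro: nth_bound)
    thus ?thesis using Cons.prems(2) Omega by (simp add: in_Pk_def)
  qed
  thus ?case using Cons g by (auto simp: wf_cons)
qed

definition SEL :: "nat \<Rightarrow> nat list \<Rightarrow> (nat \<Rightarrow> nat) \<Rightarrow> nat" where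
  "SEL s zs a = Max (insert 0 ((\<lambda>i. if 1 \<le> zs ! (i-1) then a i else 0) ` {1..s}))"

lemma unit_len[simp]: "length (unit_tuple s i) = s"
  by (simp add: unit_tuple_def)

lemma unit_nth: "1 \<le> i' \<Longrightarrow> i' \<le> s \<Longrightarrow> unit_tuple s i ! (i' - Suc 0) = (if i' = i then 1 else 0)"
proof -
  assume a: "1 \<le> i'" "i' \<le> s"
  hence "[1..<s+1] ! (i' - Suc 0) = i'" by (subst nth_upt) auto
  thus ?thesis using a unfolding unit_tuple_def by (subst nth_map) auto
qed

lemma unit_bound: "set (unit_tuple s i) \<subseteq> {0,1}"
  by (auto simp: unit_tuple_def)

lemma SEL_unit: assumes "i \<in> {1..s}" shows "SEL s (unit_tuple s i) a = a i"
proof -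
  let ?S = "insert 0 ((\<lambda>i'. if 1 \<le> unit_tuple s i ! (i'-1) then a i' else 0) ` {1..s})"
  have f: "finite ?S" by simp
  have "a i \<in> ?S" using assms unit_nth[of i s i] by (auto intro!: image_eqI[where x=i])
  hence 1: "a i \<le> Max ?S" using f by simp
  have 2: "Max ?S \<le> a i" using f by (auto simp: Max_le_iff unit_nth)
  show ?thesis unfolding SEL_def using 1 2 by (rule antisym[rotated])
qed

lemma SEL_bound: "0 < k \<Longrightarrow> (\<forall>i\<in>{1..s}. a i < k) \<Longrightarrow> SEL s zs a < k"
  unfolding SEL_def by (auto simp: Max_less_iff)

lemma SEL_mono: assumes "\<forall>i\<in>{1..s}. zs ! (i-1) \<le> zs' ! (i-1)" "\<forall>i\<in>{1..s}. a i \<le> a' i"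
  shows "SEL s zs a \<le> SEL s zs' a'"
  unfolding SEL_def
proof (subst Max_le_iff, simp, simp, intro ballI)
  fix y assume y: "y \<in> insert 0 ((\<lambda>i. if 1 \<le> zs ! (i - 1) then a i else 0) ` {1..s})"
  let ?S = "insert 0 ((\<lambda>i. if 1 \<le> zs' ! (i - 1) then a' i else 0) ` {1..s})"
  have f: "finite ?S" by simp
  show "y \<le> Max ?S"
  proof (cases "y = 0")
    case True thus ?thesis by simp
  next
    case False
    then obtain i where i: "i \<in> {1..s}" "1 \<le> zs ! (i-1)" "y = a i" using y by (auto split: if_splits)
    hence "a' i \<in> ?S" using assms(1) by (force intro!: image_eqI[where x=i])
    hence "a' i \<le> Max ?S" using f by simp
    thus ?thesis using i assms(2) by force
  qed
qed

lemma SEL_monotone_fn: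
  assumes "0 < k" "\<forall>i\<in>{1..s}. monotone_fn k N (F i)"
  shows "monotone_fn k (s + N) (\<lambda>vs. SEL s (take s vs) (\<lambda>i. F i (drop s vs)))"
  unfolding monotone_fn_def in_Pk_def
proof (intro conjI ballI impI)
  fix xs assume xs: "xs \<in> tuples k (s+N)"
  hence "drop s xs \<in> tuples k N" by (auto simp: tuples_def dest: in_set_dropD)
  thus "SEL s (take s xs) (\<lambda>i. F i (drop s xs)) < k"
    using assms by (intro SEL_bound) (auto simp: monotone_fn_def in_Pk_def)
next
  fix xs ys assume xs: "xs \<in> tuples k (s+N)" and ys: "ys \<in> tuples k (s+N)" and le: "list_all2 (\<le>) xs ys"
  hence d: "drop s xs \<in> tuples k N" "drop s ys \<in> tuples k N" by (auto simp: tuples_def dest: in_set_dropD)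
  have "list_all2 (\<le>) (drop s xs) (drop s ys)" using le by simp
  hence a: "\<forall>i\<in>{1..s}. F i (drop s xs) \<le> F i (drop s ys)" using assms(2) d by (auto simp: monotone_fn_def)
  have "\<forall>i\<in>{1..s}. take s xs ! (i-1) \<le> take s ys ! (i-1)"
    using le xs by (auto simp: tuples_def list_all2_conv_all_nth)
  thus "SEL s (take s xs) (\<lambda>i. F i (drop s xs)) \<le> SEL s (take s ys) (\<lambda>i. F i (drop s ys))"
    using a by (rule SEL_mono)
qed

lemma wf_app: "wf_circ k q b (C1 @ C2) \<longleftrightarrow> wf_circ k q b C1 \<and> wf_circ k q (b + length C1) C2"
proof (induction C1 arbitrary: b)
  case Nil thus ?case by (simp add: wf_circ_def)
next
  case (Cons g C1)
  obtain l a where "g = (l,a)" by (cases g) blast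
  thus ?case using Cons by (simp add: wf_cons)
qed

lemma wf_nil[simp]: "wf_circ k q b []" by (simp add: wf_circ_def)

lemma wf_map_mono: "(\<forall>p\<in>set a. p < b) \<Longrightarrow> (\<forall>r\<in>set xs. monotone_fn k (length a) (H r))
   \<Longrightarrow> wf_circ k q b (map (\<lambda>r. (Mono (H r), a)) xs)"
proof (induction xs arbitrary: b)
  case Nil thus ?case by simp
next
  case (Cons x xs)
  have pb: "\<forall>p\<in>set a. p < Suc b" using Cons.prems by auto
  show ?case using Cons.IH[OF pb] Cons.prems by (simp add: wf_cons)
qed

lemma oc_map_mono: "omega_count (map (\<lambda>r. (Mono (H r), a)) xs) = 0"
  by (induction xs) auto

lemma eval_map_mono: "(\<forall>p\<in>set a. p < length vals) \<Longrightarrow>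
  eval_circ \<omega> (map (\<lambda>r. (Mono (H r), a)) xs) vals = vals @ map (\<lambda>r. H r (map ((!) vals) a)) xs"
proof (induction xs arbitrary: vals)
  case Nil thus ?case by simp
next
  case (Cons x xs)
  have e: "map ((!) (vals @ [H x (map ((!) vals) a)])) a = map ((!) vals) a"
    using Cons.prems by (auto simp: nth_append)
  have p: "\<forall>p\<in>set a. p < length (vals @ [H x (map ((!) vals) a)])" using Cons.prems by auto
  show ?case using Cons.IH[OF p] e by simp
qed

lemma eval_take: "take (length vals) (eval_circ \<omega> C vals) = vals"
  by (rule nth_equalityI) (auto simp: eval_len eval_prefix)

definition ypos :: "nat \<Rightarrow> nat \<Rightarrow> nat \<Rightarrow> nat list" where
  "ypos b q t = map (\<lambda>u. b + u*(q+1) + q) [0..<t]"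

definition AR :: "nat \<Rightarrow> nat \<Rightarrow> nat \<Rightarrow> nat list" where
  "AR b q t = [0..<b] @ ypos b q t"

definition layer :: "nat \<Rightarrow> nat \<Rightarrow> nat \<Rightarrow> (nat \<Rightarrow> nat \<Rightarrow> nat list \<Rightarrow> nat) \<Rightarrow> nat \<Rightarrow> circuit" where
  "layer s b q H t = map (\<lambda>r. (Mono (H t r), AR b q t)) [0..<q] @ [(Omega, [b+t*(q+1) ..< b+t*(q+1)+q])]"

definition layers where
  "layers s b q H t = concat (map (layer s b q H) [0..<t])"

lemma layers_0[simp]: "layers s b q H 0 = []" by (simp add: layers_def)

lemma layers_Suc: "layers s b q H (Suc t) = layers s b q H t @ layer s b q H t"
  by (simp add: layers_def)

lemma layer_len: "length (layer s b q H t) = q + 1" by (simp add: layer_def)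

lemma layers_len: "length (layers s b q H t) = t * (q+1)"
  by (induction t) (auto simp: layers_Suc layer_len)

lemma layers_oc: "omega_count (layers s b q H t) = t"
  by (induction t) (auto simp: layers_Suc layer_def oc_app oc_map_mono)

lemma AR_len: "length (AR b q t) = b + t" by (simp add: AR_def ypos_def)

lemma AR_bound: "p \<in> set (AR b q t) \<Longrightarrow> p < b + t * (q+1)"
proof -
  assume "p \<in> set (AR b q t)"
  then consider "p < b" | u where "u < t" "p = b + u*(q+1)+q" by (auto simp: AR_def ypos_def)
  thus ?thesis
  proof cases
    case 1 thus ?thesis by simp
  next
    case 2
    have "(u+1)*(q+1) \<le> t*(q+1)" using 2 by (intro mult_le_mono1) simp
    thus ?thesis using 2 by simp
  qed
qed

lemma layers_wf:
  assumes "\<forall>t'<t. \<forall>r<q. monotone_fn k (b + t') (H t' r)"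
  shows "wf_circ k q b (layers s b q H t)"
  using assms
proof (induction t)
  case 0 thus ?case by (simp add: layers_def)
next
  case (Suc t)
  have w1: "wf_circ k q (b + t*(q+1)) (map (\<lambda>r. (Mono (H t r), AR b q t)) [0..<q])"
    using Suc(2) AR_bound by (intro wf_map_mono) (auto simp: AR_len)
  have w2: "wf_circ k q (b + t*(q+1) + q) [(Omega, [b+t*(q+1) ..< b+t*(q+1)+q])]"
    by (simp add: wf_cons)
  show ?case using Suc w1 w2 by (simp add: layers_Suc wf_app layers_len layer_def)
qed

lemma layer_eval:
  assumes "length vals = b + t*(q+1)"
  shows "eval_circ \<omega> (layer s b q H t) vals =
    vals @ map (\<lambda>r. H t r (map ((!) vals) (AR b q t))) [0..<q] @ [\<omega> (map (\<lambda>r. H t r (map ((!) vals) (AR b q t))) [0..<q])]"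
proof -
  let ?R = "map (\<lambda>r. H t r (map ((!) vals) (AR b q t))) [0..<q]"
  have e1: "eval_circ \<omega> (map (\<lambda>r. (Mono (H t r), AR b q t)) [0..<q]) vals = vals @ ?R"
    using assms AR_bound by (intro eval_map_mono) auto
  have "map ((!) (vals @ ?R)) [b+t*(q+1) ..< b+t*(q+1)+q] = ?R"
    using assms by (intro nth_equalityI) (auto simp: nth_append)
  thus ?thesis using e1 by (simp add: layer_def eval_app)
qed

definition VV where "VV \<omega> s b q H vs t = eval_circ \<omega> (layers s b q H t) vs"
definition YY where "YY \<omega> s b q H vs t = map ((!) (VV \<omega> s b q H vs t)) (ypos b q t)"

lemma VV_len: "length vs = b \<Longrightarrow> length (VV \<omega> s b q H vs t) = b + t*(q+1)"
  by (simp add: VV_def eval_len layers_len)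

lemma VV_take: "take (length vs) (VV \<omega> s b q H vs t) = vs"
  by (simp add: VV_def eval_take)

lemma VV_AR: assumes "length vs = b"
  shows "map ((!) (VV \<omega> s b q H vs t)) (AR b q t) = vs @ YY \<omega> s b q H vs t"
proof -
  have l: "length (VV \<omega> s b q H vs t) = b + t*(q+1)" using VV_len assms by blast
  have "map ((!) (VV \<omega> s b q H vs t)) [0..<b] = vs"
  proof (intro nth_equalityI)
    fix p assume "p < length (map ((!) (VV \<omega> s b q H vs t)) [0..<b])"
    hence p: "p < b" by simp
    have "VV \<omega> s b q H vs t ! p = take (length vs) (VV \<omega> s b q H vs t) ! p" using p assms by simp
    thus "map ((!) (VV \<omega> s b q H vs t)) [0..<b] ! p = vs ! p" using p VV_take[of vs] by simp
  qed (simp add: assms)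
  thus ?thesis by (simp add: AR_def YY_def)
qed

lemma YY_Suc: assumes "length vs = b"
  shows "YY \<omega> s b q H vs (Suc t) = YY \<omega> s b q H vs t @
     [\<omega> (map (\<lambda>r. H t r (vs @ YY \<omega> s b q H vs t)) [0..<q])]"
proof -
  let ?V = "VV \<omega> s b q H vs t"
  have l: "length ?V = b + t*(q+1)" using VV_len assms by blast
  let ?R = "map (\<lambda>r. H t r (map ((!) ?V) (AR b q t))) [0..<q]"
  have V: "VV \<omega> s b q H vs (Suc t) = ?V @ ?R @ [\<omega> ?R]"
    using layer_eval[OF l] by (simp add: VV_def layers_Suc eval_app)
  have yp: "ypos b q (Suc t) = ypos b q t @ [b + t*(q+1) + q]" by (simp add: ypos_def)
  have "map ((!) (?V @ ?R @ [\<omega> ?R])) (ypos b q t) = map ((!) ?V) (ypos b q t)"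
    using AR_bound[of _ b q t] l by (auto simp: nth_append AR_def)
  moreover have "(?V @ ?R @ [\<omega> ?R]) ! (b + t*(q+1) + q) = \<omega> ?R"
    using l by (simp add: nth_append)
  ultimately show ?thesis using V yp VV_AR[OF assms] by (simp add: YY_def)
qed

lemma YY_len: "length (YY \<omega> s b q H vs t) = t" by (simp add: YY_def ypos_def)

definition rho :: "nat \<Rightarrow> nat \<Rightarrow> nat \<Rightarrow> nat" where
  "rho s n p = (if p < s then n + p else if p < s + n then p - s else p)"

lemma rho_lt: "p < L \<Longrightarrow> s + n \<le> L \<Longrightarrow> rho s n p < L"
  by (auto simp: rho_def)

definition remap :: "nat \<Rightarrow> nat \<Rightarrow> circuit \<Rightarrow> circuit" where
  "remap s n D = map (\<lambda>(l,a). (l, map (rho s n) a)) D"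

lemma remap_cons[simp]: "remap s n ((l,a)#D) = (l, map (rho s n) a) # remap s n D"
  by (simp add: remap_def)
lemma remap_nil[simp]: "remap s n [] = []" by (simp add: remap_def)
lemma remap_len[simp]: "length (remap s n D) = length D" by (simp add: remap_def)

lemma remap_oc: "omega_count (remap s n D) = omega_count D"
  by (induction D) (auto simp: remap_def omega_count_def)

lemma remap_wf: "wf_circ k q B D \<Longrightarrow> s + n \<le> B \<Longrightarrow> wf_circ k q B (remap s n D)"
proof (induction D arbitrary: B)
  case Nil thus ?case by simp
next
  case (Cons g D)
  obtain l a where g: "g = (l,a)" by (cases g) blast
  have w: "\<forall>i\<in>set a. i < B" "case l of Mono h \<Rightarrow> monotone_fn k (length a) h | Omega \<Rightarrow> length a = q"
     "wf_circ k q (Suc B) D" using Cons.prems(1) g by (auto simp: wf_cons)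
  have "wf_circ k q (Suc B) (remap s n D)" using Cons.IH[OF w(3)] Cons.prems(2) by simp
  moreover have "\<forall>i\<in>set (map (rho s n) a). i < B" using w(1) Cons.prems(2) rho_lt by auto
  ultimately show ?case using w(2) g by (cases l) (auto simp: wf_cons)
qed

lemma remap_eval:
  "wf_circ k q (length vals) D \<Longrightarrow> length vals' = length vals \<Longrightarrow> s + n \<le> length vals \<Longrightarrow>
   (\<forall>p<length vals. vals' ! rho s n p = vals ! p) \<Longrightarrow>
   (\<forall>p<length vals + length D. eval_circ \<omega> (remap s n D) vals' ! rho s n p = eval_circ \<omega> D vals ! p)"
proof (induction D arbitrary: vals vals')
  case Nil thus ?case by simp
next
  case (Cons g D)
  obtain l a where g: "g = (l,a)" by (cases g) blast
  have w: "\<forall>i\<in>set a. i < length vals" "wf_circ k q (Suc (length vals)) D"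
    using Cons.prems(1) g by (auto simp: wf_cons)
  define v where "v = lab_apply \<omega> l (map ((!) vals) a)"
  have mv: "map ((!) vals' \<circ> rho s n) a = map ((!) vals) a"
    using w(1) Cons.prems(4) by auto
  have inv: "\<forall>p<length (vals @ [v]). (vals' @ [v]) ! rho s n p = (vals @ [v]) ! p"
  proof (intro allI impI)
    fix p assume p: "p < length (vals @ [v])"
    show "(vals' @ [v]) ! rho s n p = (vals @ [v]) ! p"
    proof (cases "p < length vals")
      case True
      have "rho s n p < length vals" using rho_lt True Cons.prems(3) by blast
      thus ?thesis using True Cons.prems(2,4) by (simp add: nth_append)
    next
      case False
      hence "p = length vals" using p by simp
      moreover hence "rho s n p = p" using Cons.prems(3) by (simp add: rho_def)
      ultimately show ?thesis using Cons.prems(2) by (simp add: nth_append)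
    qed
  qed
  have IH: "\<forall>p<length (vals @ [v]) + length D.
     eval_circ \<omega> (remap s n D) (vals' @ [v]) ! rho s n p = eval_circ \<omega> D (vals @ [v]) ! p"
    by (rule Cons.IH) (use w(2) Cons.prems(2,3) inv in \<open>auto\<close>)
  have ev: "eval_circ \<omega> (remap s n ((l,a)#D)) vals' = eval_circ \<omega> (remap s n D) (vals' @ [v])"
    by (simp only: remap_cons eval_cons map_map mv v_def)
  have ev2: "eval_circ \<omega> ((l,a)#D) vals = eval_circ \<omega> D (vals @ [v])" by (simp add: v_def)
  show ?case using IH ev ev2 g by simp
qed

definition cgates :: "nat \<Rightarrow> nat list \<Rightarrow> circuit" where
  "cgates s e = map (\<lambda>l. (Mono (\<lambda>_. e ! l), [])) [0..<s]"

lemma cgates_eval: "length e = s \<Longrightarrow> eval_circ \<omega> (cgates s e) xs = xs @ e"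
  unfolding cgates_def by (subst eval_map_mono) (auto simp: map_nth)

lemma cgates_oc: "omega_count (cgates s e) = 0"
  unfolding cgates_def by (rule oc_map_mono)

lemma cgates_wf: "set e \<subseteq> {..<k} \<Longrightarrow> length e = s \<Longrightarrow> wf_circ k q n (cgates s e)"
  unfolding cgates_def
  by (rule wf_map_mono) (auto simp: monotone_fn_def in_Pk_def intro: nth_bound)

lemma subst_circ:
  assumes wf: "wf_circ k q (s+n) D" and k: "2 \<le> k" and e: "length e = s" "set e \<subseteq> {0,1}"
  shows "wf_circ k q n (cgates s e @ remap s n D) \<and>
         omega_count (cgates s e @ remap s n D) = omega_count D \<and>
         (\<forall>p < s + n + length D. rho s n p < n + length (cgates s e @ remap s n D) \<and>
            (\<forall>xs. length xs = n \<longrightarrow>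
              eval_circ \<omega> (cgates s e @ remap s n D) xs ! rho s n p = eval_circ \<omega> D (e @ xs) ! p))"
proof (intro conjI allI impI)
  have ek: "set e \<subseteq> {..<k}" using e(2) k by auto
  show "wf_circ k q n (cgates s e @ remap s n D)"
    using cgates_wf[OF ek e(1)] remap_wf[OF wf] by (simp add: wf_app cgates_def add.commute)
  show "omega_count (cgates s e @ remap s n D) = omega_count D"
    by (simp add: oc_app cgates_oc remap_oc)
  fix p assume p: "p < s + n + length D"
  show "rho s n p < n + length (cgates s e @ remap s n D)"
    using rho_lt[of p "s+n+length D" s n] p by (simp add: cgates_def)
  fix xs :: "nat list" assume xs: "length xs = n"
  have "\<forall>p<length (e @ xs). (xs @ e) ! rho s n p = (e @ xs) ! p"
    using e(1) xs by (auto simp: rho_def nth_append)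
  hence "\<forall>p<length (e @ xs) + length D. eval_circ \<omega> (remap s n D) (xs @ e) ! rho s n p = eval_circ \<omega> D (e @ xs) ! p"
    using wf e(1) xs by (intro remap_eval) auto
  thus "eval_circ \<omega> (cgates s e @ remap s n D) xs ! rho s n p = eval_circ \<omega> D (e @ xs) ! p"
    using p e(1) xs by (simp add: eval_app cgates_eval)
qed

lemma oargs_qlen:
  "wf_circ k q (length vals) C \<Longrightarrow> as \<in> set (oargs C ys vals) \<Longrightarrow> length as = q"
proof (induction C ys vals rule: oargs.induct)
  case (1 ys vals) thus ?case by simp
next
  case (2 h a C ys vals) thus ?case by (auto simp: wf_cons)
next
  case (3 a C ys vals) thus ?case by (auto simp: wf_cons)
qed

definition outs :: "nat \<Rightarrow> nat \<Rightarrow> nat \<Rightarrow> (nat \<Rightarrow> nat list \<Rightarrow> nat) \<Rightarrow> nat \<Rightarrow> circuit" where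
  "outs b q c HO m = map (\<lambda>j. (Mono (HO j), AR b q c)) [1..<m+1]"

lemma full_eval:
  assumes "length vs = b"
  shows "eval_circ \<omega> (layers s b q H c @ outs b q c HO m) vs =
    VV \<omega> s b q H vs c @ map (\<lambda>j. HO j (vs @ YY \<omega> s b q H vs c)) [1..<m+1]"
proof -
  have l: "length (VV \<omega> s b q H vs c) = b + c*(q+1)" using VV_len assms by blast
  have e1: "eval_circ \<omega> (layers s b q H c @ outs b q c HO m) vs = eval_circ \<omega> (outs b q c HO m) (VV \<omega> s b q H vs c)"
    by (simp add: eval_app VV_def)
  have "eval_circ \<omega> (outs b q c HO m) (VV \<omega> s b q H vs c) =
     VV \<omega> s b q H vs c @ map (\<lambda>j. HO j (map ((!) (VV \<omega> s b q H vs c)) (AR b q c))) [1..<m+1]"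
    unfolding outs_def using l AR_bound by (intro eval_map_mono) auto
  thus ?thesis using VV_AR[OF assms] e1 by simp
qed

lemma full_node:
  assumes "length vs = b" "j \<in> {1..m}"
  shows "eval_circ \<omega> (layers s b q H c @ outs b q c HO m) vs ! (b + c*(q+1) + (j-1)) =
    HO j (vs @ YY \<omega> s b q H vs c)"
proof -
  have l: "length (VV \<omega> s b q H vs c) = b + c*(q+1)" using VV_len assms by blast
  obtain j' where j': "j = Suc j'" "j' < m" using assms(2) by (cases j) auto
  have "[1..<m+1] ! j' = Suc j'" using j'(2) by (subst nth_upt) auto
  hence "map (\<lambda>j. HO j (vs @ YY \<omega> s b q H vs c)) [1..<m+1] ! j' = HO j (vs @ YY \<omega> s b q H vs c)"
    using j' by (simp del: upt_Suc)
  moreover have "b + c*(q+1) + (j-1) = length (VV \<omega> s b q H vs c) + j'" using l j' by simp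
  ultimately show ?thesis by (simp only: full_eval[OF assms(1)] nth_append_length_plus)
qed

lemma full_wf:
  assumes "\<forall>t<c. \<forall>r<q. monotone_fn k (b + t) (H t r)" "\<forall>j\<in>{1..m}. monotone_fn k (b + c) (HO j)"
  shows "wf_circ k q b (layers s b q H c @ outs b q c HO m)"
proof -
  have "wf_circ k q (b + c*(q+1)) (outs b q c HO m)"
    unfolding outs_def using assms(2) AR_bound by (intro wf_map_mono) (auto simp: AR_len)
  thus ?thesis using layers_wf[OF assms(1)] by (simp add: wf_app layers_len)
qed

lemma full_oc: "omega_count (layers s b q H c @ outs b q c HO m) = c"
  by (simp add: oc_app layers_oc outs_def oc_map_mono)

lemma full_len: "length (layers s b q H c @ outs b q c HO m) = c*(q+1) + m"
  by (simp add: layers_len outs_def)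

lemma YY_track:
  assumes len: "length vs = b" and cnt: "omega_count C \<le> c"
  and HA: "\<And>t. t < c \<Longrightarrow> t < omega_count C \<Longrightarrow>
     map (\<lambda>r. H t r (vs @ YY \<omega> s b q H vs t)) [0..<q] = oargs C (YY \<omega> s b q H vs t) x ! t"
  shows "take (omega_count C) (YY \<omega> s b q H vs c) = tom \<omega> C x"
proof -
  let ?Y = "YY \<omega> s b q H vs"
  let ?T = "tom \<omega> C x"
  let ?n = "omega_count C"
  have lT: "length ?T = ?n" by (simp add: tom_len)
  have main: "t \<le> c \<Longrightarrow> take ?n (?Y t) = take t ?T" for t
  proof (induction t)
    case 0
    have "?Y 0 = []" using YY_len[of \<omega> s b q H vs 0] by simp
    thus ?case by simp
  next
    case (Suc t)
    hence tc: "t < c" by simp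
    have IH: "take ?n (?Y t) = take t ?T" using Suc by simp
    have lY: "length (?Y t) = t" by (simp add: YY_len)
    let ?R = "map (\<lambda>r. H t r (vs @ ?Y t)) [0..<q]"
    have YS: "?Y (Suc t) = ?Y t @ [\<omega> ?R]" by (rule YY_Suc[OF len])
    show ?case
    proof (cases "t < ?n")
      case True
      have Yt: "?Y t = take t ?T" using IH lY True by simp
      have R: "?R = oargs C (?Y t) x ! t" using HA[OF tc True] .
      have "take t (?Y t) = take t ?T" using Yt by simp
      hence "take (Suc t) (oargs C (?Y t) x) = take (Suc t) (oargs C ?T x)" by (rule oargs_prefix)
      hence "oargs C (?Y t) x ! t = oargs C ?T x ! t"
        by (metis lessI nth_take)
      hence "\<omega> ?R = ?T ! t" using R True tom_oargs[where C=C and \<omega>=\<omega> and vals=x] oargs_len[of C ?T x]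
        by (metis nth_map)
      hence "?Y (Suc t) = take (Suc t) ?T" using YS Yt True lT by (simp add: take_Suc_conv_app_nth)
      thus ?thesis using True lT by simp
    next
      case False
      have "take ?n (?Y (Suc t)) = take ?n (?Y t)" using YS lY False by simp
      also have "\<dots> = take t ?T" by (rule IH)
      also have "\<dots> = take (Suc t) ?T" using False lT by simp
      finally show ?thesis .
    qed
  qed
  have "take ?n (?Y c) = take c ?T" using main by simp
  thus ?thesis using cnt lT by simp
qed

lemma unit_inj: "i \<in> {1..s} \<Longrightarrow> i' \<in> {1..s} \<Longrightarrow> unit_tuple s i = unit_tuple s i' \<Longrightarrow> i = i'"
proof -
  assume a: "i \<in> {1..s}" "i' \<in> {1..s}" "unit_tuple s i = unit_tuple s i'"
  have "unit_tuple s i ! (i - Suc 0) = 1" using a(1) unit_nth[of i s i] by simp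
  hence "unit_tuple s i' ! (i - Suc 0) = 1" using a(3) by simp
  moreover have "unit_tuple s i' ! (i - Suc 0) = (if i = i' then 1 else 0)" using a(1) unit_nth[of i s i'] by simp
  ultimately show "i = i'" by (cases "i = i'") simp_all
qed

lemma unit_app_tuples: "2 \<le> k \<Longrightarrow> xs \<in> tuples k n \<Longrightarrow> unit_tuple s i @ xs \<in> tuples k (s + n)"
  unfolding tuples_def using unit_bound[of s i] by fastforce

lemma tuples_drop: "vs \<in> tuples k (s + n) \<Longrightarrow> drop s vs \<in> tuples k n"
  unfolding tuples_def using set_drop_subset[of s vs] by auto

lemma tuples_take: "vs \<in> tuples k (n + t) \<Longrightarrow> take n vs \<in> tuples k n"
  unfolding tuples_def using set_take_subset[of n vs] by auto

lemma tuples_drop2: "vs \<in> tuples k (n + t) \<Longrightarrow> drop n vs \<in> tuples k t"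
  unfolding tuples_def using set_drop_subset[of n vs] by auto

lemma tuplesD: "xs \<in> tuples k N \<Longrightarrow> length xs = N \<and> set xs \<subseteq> {..<k}"
  by (simp add: tuples_def)

theorem lemma2:
  fixes k q s m n :: nat and \<omega> :: "nat list \<Rightarrow> nat"
    and f :: "nat \<Rightarrow> nat \<Rightarrow> nat list \<Rightarrow> nat"
  assumes "k \<ge> 2" and "q \<ge> 1"
    and "in_Pk k q \<omega>" and "\<not> monotone_fn k q \<omega>"
    and "s \<ge> 1" and "m \<ge> 1" and "n \<ge> 1"
    and "\<forall>i\<in>{1..s}. \<forall>j\<in>{1..m}. in_Pk k n (f i j)"
  shows "\<exists>g :: nat \<Rightarrow> nat list \<Rightarrow> nat.
           (\<forall>j\<in>{1..m}. in_Pk k (s + n) (g j) \<and> connector k s n (g j) (\<lambda>i. f i j)) \<and>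
           I_B k q \<omega> (s + n) (g ` {1..m})
             \<le> Max ((\<lambda>i. I_B k q \<omega> n ((\<lambda>j. f i j) ` {1..m})) ` {1..s})"
proof -
  let ?F = "\<lambda>i. (\<lambda>j. f i j) ` {1..m}"
  let ?M = "Max ((\<lambda>i. I_B k q \<omega> n (?F i)) ` {1..s})"
  have k0: "0 < k" using assms(1) by simp
  have Ile: "I_B k q \<omega> n (?F i) \<le> ?M" if "i \<in> {1..s}" for i
    using that by (intro Max_ge) auto
  show ?thesis
  proof (cases "\<forall>i\<in>{1..s}. \<exists>C. wf_circ k q n C \<and> realizes k n \<omega> C (?F i)")
    case False
    then obtain i0 where i0: "i0 \<in> {1..s}" "\<not> (\<exists>C. wf_circ k q n C \<and> realizes k n \<omega> C (?F i0))"
      by blast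
    define g where "g j vs = (if \<exists>i\<in>{1..s}. take s vs = unit_tuple s i
       then f (SOME i. i \<in> {1..s} \<and> take s vs = unit_tuple s i) j (drop s vs) else 0)" for j vs
    have gu: "g j (unit_tuple s i @ xs) = f i j xs" if "i \<in> {1..s}" for i j xs
    proof -
      have "(SOME i'. i' \<in> {1..s} \<and> unit_tuple s i = unit_tuple s i') = i"
        using that unit_inj by (intro some_equality) auto
      thus ?thesis using that unfolding g_def by auto
    qed
    have conn: "\<forall>j\<in>{1..m}. in_Pk k (s + n) (g j) \<and> connector k s n (g j) (\<lambda>i. f i j)"
    proof (intro ballI conjI)
      fix j assume j: "j \<in> {1..m}"
      show "connector k s n (g j) (\<lambda>i. f i j)" unfolding connector_def using gu by simp
      show "in_Pk k (s + n) (g j)" unfolding in_Pk_def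
      proof
        fix vs assume vs: "vs \<in> tuples k (s + n)"
        show "g j vs < k"
        proof (cases "\<exists>i\<in>{1..s}. take s vs = unit_tuple s i")
          case True
          let ?i = "SOME i. i \<in> {1..s} \<and> take s vs = unit_tuple s i"
          have "?i \<in> {1..s}" using someI_ex[of "\<lambda>i. i \<in> {1..s} \<and> take s vs = unit_tuple s i"] True by blast
          hence "in_Pk k n (f ?i j)" using assms(8) j by blast
          hence "f ?i j (drop s vs) < k" using tuples_drop[OF vs] unfolding in_Pk_def by blast
          thus ?thesis using True unfolding g_def by simp
        next
          case False thus ?thesis using k0 unfolding g_def by simp
        qed
      qed
    qed
    have noG: "\<not> (\<exists>D. wf_circ k q (s + n) D \<and> realizes k (s + n) \<omega> D (g ` {1..m}))"
    proof
      assume "\<exists>D. wf_circ k q (s + n) D \<and> realizes k (s + n) \<omega> D (g ` {1..m})"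
      then obtain D where D: "wf_circ k q (s + n) D" "realizes k (s + n) \<omega> D (g ` {1..m})" by blast
      let ?e = "unit_tuple s i0"
      let ?D' = "cgates s ?e @ remap s n D"
      have e: "length ?e = s" "set ?e \<subseteq> {0,1}" using unit_bound by auto
      note sc = subst_circ[OF D(1) assms(1) e, where \<omega>=\<omega>]
      note sc1 = sc[THEN conjunct1] and sc3 = sc[THEN conjunct2, THEN conjunct2]
      have "realizes k n \<omega> ?D' (?F i0)"
        unfolding realizes_def
      proof
        fix h assume "h \<in> ?F i0"
        then obtain j where j: "j \<in> {1..m}" "h = f i0 j" by blast
        obtain p where p: "p < s + n + length D" "\<forall>vs\<in>tuples k (s + n). eval_circ \<omega> D vs ! p = g j vs"
          using D(2)[unfolded realizes_def, rule_format, OF imageI[OF j(1)]] by blast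
        show "\<exists>i<n + length ?D'. \<forall>xs\<in>tuples k n. eval_circ \<omega> ?D' xs ! i = h xs"
        proof (intro exI conjI ballI)
          have sp: "rho s n p < n + length ?D' \<and> (\<forall>xs. length xs = n \<longrightarrow>
              eval_circ \<omega> ?D' xs ! rho s n p = eval_circ \<omega> D (?e @ xs) ! p)"
            using sc3 p(1) by blast
          show "rho s n p < n + length ?D'" using sp by blast
          fix xs assume xs: "xs \<in> tuples k n"
          have "eval_circ \<omega> ?D' xs ! rho s n p = eval_circ \<omega> D (?e @ xs) ! p"
            using sp tuplesD[OF xs] by blast
          also have "\<dots> = g j (?e @ xs)" using p(2) unit_app_tuples[OF assms(1) xs] by blast
          also have "\<dots> = h xs" using gu i0(1) j by simp
          finally show "eval_circ \<omega> ?D' xs ! rho s n p = h xs" .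
        qed
      qed
      moreover have "wf_circ k q n ?D'" using sc1 .
      ultimately show False using i0(2) by blast
    qed
    have n1: "\<And>c. \<not> (\<exists>C. wf_circ k q (s + n) C \<and> realizes k (s + n) \<omega> C (g ` {1..m}) \<and> omega_count C = c)"
      using noG by blast
    have n2: "\<And>c. \<not> (\<exists>C. wf_circ k q n C \<and> realizes k n \<omega> C (?F i0) \<and> omega_count C = c)"
      using i0(2) by blast
    have "I_B k q \<omega> (s + n) (g ` {1..m}) = I_B k q \<omega> n (?F i0)"
      unfolding I_B_def by (simp only: n1 n2)
    thus ?thesis using conn Ile[OF i0(1)] by (intro exI[of _ g]) simp
  next
    case True
    have "\<forall>i\<in>{1..s}. \<exists>C. wf_circ k q n C \<and> realizes k n \<omega> C (?F i) \<and> omega_count C = I_B k q \<omega> n (?F i)"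
    proof
      fix i assume i: "i \<in> {1..s}"
      let ?P = "\<lambda>c. \<exists>C. wf_circ k q n C \<and> realizes k n \<omega> C (?F i) \<and> omega_count C = c"
      have "\<exists>c. ?P c" using True i by blast
      hence "?P (LEAST c. ?P c)" by (rule LeastI_ex)
      thus "\<exists>C. wf_circ k q n C \<and> realizes k n \<omega> C (?F i) \<and> omega_count C = I_B k q \<omega> n (?F i)"
        unfolding I_B_def .
    qed
    hence "\<exists>CC. \<forall>i\<in>{1..s}. wf_circ k q n (CC i) \<and> realizes k n \<omega> (CC i) (?F i)
       \<and> omega_count (CC i) = I_B k q \<omega> n (?F i)" by (rule bchoice)
    then obtain CC where CC0: "\<forall>i\<in>{1..s}. wf_circ k q n (CC i) \<and> realizes k n \<omega> (CC i) (?F i)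
       \<and> omega_count (CC i) = I_B k q \<omega> n (?F i)"
      by blast
    have CC: "wf_circ k q n (CC i) \<and> realizes k n \<omega> (CC i) (?F i)
       \<and> omega_count (CC i) = I_B k q \<omega> n (?F i)" if "i \<in> {1..s}" for i
      using CC0 that by blast
    define c where "c = ?M"
    have cnt: "omega_count (CC i) \<le> c" if "i \<in> {1..s}" for i using CC[OF that] Ile[OF that] c_def by simp
    define P where "P i j = (SOME p. p < n + length (CC i) \<and> (\<forall>xs\<in>tuples k n. eval_circ \<omega> (CC i) xs ! p = f i j xs))" for i j
    have Pp: "P i j < n + length (CC i) \<and> (\<forall>xs\<in>tuples k n. eval_circ \<omega> (CC i) xs ! P i j = f i j xs)"
      if "i \<in> {1..s}" "j \<in> {1..m}" for i j
    proof -
      have "\<exists>p. p < n + length (CC i) \<and> (\<forall>xs\<in>tuples k n. eval_circ \<omega> (CC i) xs ! p = f i j xs)"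
        using CC[OF that(1)] that(2) unfolding realizes_def by blast
      thus ?thesis unfolding P_def by (rule someI_ex)
    qed
    define A where "A i t r w = (if t < omega_count (CC i) then oargs (CC i) (drop n w) (take n w) ! t ! r else 0)" for i t r w
    define Ou where "Ou i j w = evo (CC i) (drop n w) (take n w) ! P i j" for i j w
    define H where "H t r vs = SEL s (take s vs) (\<lambda>i. A i t r (drop s vs))" for t r vs
    define HO where "HO j vs = SEL s (take s vs) (\<lambda>i. Ou i j (drop s vs))" for j vs
    define D where "D = layers s (s + n) q H c @ outs (s + n) q c HO m"
    define g where "g j vs = eval_circ \<omega> D vs ! (s + n + c*(q+1) + (j-1))" for j vs
    have Amono: "monotone_fn k (n + t) (A i t r)" if i: "i \<in> {1..s}" and r: "r < q" for i t r
      unfolding monotone_fn_def in_Pk_def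
    proof (intro conjI ballI impI)
      have wfi: "wf_circ k q n (CC i)" using CC[OF i] by blast
      fix w assume w: "w \<in> tuples k (n + t)"
      have tw: "take n w \<in> tuples k n" "drop n w \<in> tuples k t" using tuples_take[OF w] tuples_drop2[OF w] .
      show "A i t r w < k"
      proof (cases "t < omega_count (CC i)")
        case True
        let ?L = "oargs (CC i) (drop n w) (take n w)"
        have "?L ! t \<in> set ?L" using True by (simp add: oargs_len)
        hence "set (?L ! t) \<subseteq> {..<k} \<and> length (?L ! t) = q"
          using oargs_bound[of k q "take n w" "CC i" "drop n w" "?L ! t"] wfi tuplesD[OF tw(1)] tuplesD[OF tw(2)] k0 by simp
        hence "?L ! t ! r < k" using r nth_bound[of "?L ! t" k r] by simp
        thus ?thesis using True unfolding A_def by simp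
      next
        case False thus ?thesis using k0 unfolding A_def by simp
      qed
      fix w' assume w': "w' \<in> tuples k (n + t)" and le: "list_all2 (\<le>) w w'"
      have tw': "take n w' \<in> tuples k n" "drop n w' \<in> tuples k t" using tuples_take[OF w'] tuples_drop2[OF w'] .
      show "A i t r w \<le> A i t r w'"
      proof (cases "t < omega_count (CC i)")
        case True
        let ?L = "oargs (CC i) (drop n w) (take n w)"
        let ?L' = "oargs (CC i) (drop n w') (take n w')"
        have "list_all2 (list_all2 (\<le>)) ?L ?L'"
        proof (rule oargs_mono)
          have "length (take n w) = n" using tuplesD[OF tw(1)] by blast
          thus "wf_circ k q (length (take n w)) (CC i)" using wfi by (simp only:)
        qed (use k0 tuplesD[OF tw(1)] tuplesD[OF tw(2)] tuplesD[OF tw'(1)] tuplesD[OF tw'(2)]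
            list_all2_takeI[OF le] list_all2_dropI[OF le] in blast)+
        moreover have "t < length ?L" using True by (simp add: oargs_len)
        ultimately have l2: "list_all2 (\<le>) (?L ! t) (?L' ! t)" by (rule list_all2_nthD)
        have "?L ! t \<in> set ?L" using True by (simp add: oargs_len)
        moreover have "wf_circ k q (length (take n w)) (CC i)"
        proof -
          have "length (take n w) = n" using tuplesD[OF tw(1)] by blast
          thus ?thesis using wfi by (simp only:)
        qed
        ultimately have "length (?L ! t) = q" using oargs_qlen by blast
        hence "r < length (?L ! t)" using r by simp
        with l2 have "?L ! t ! r \<le> ?L' ! t ! r" by (rule list_all2_nthD)
        thus ?thesis using True unfolding A_def by simp
      next
        case False thus ?thesis unfolding A_def by simp
      qed
    qed
    have Omono: "monotone_fn k (n + c) (Ou i j)" if i: "i \<in> {1..s}" and j: "j \<in> {1..m}" for i j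
      unfolding monotone_fn_def in_Pk_def
    proof (intro conjI ballI impI)
      have wfi: "wf_circ k q n (CC i)" using CC[OF i] by blast
      have pl: "P i j < n + length (CC i)" using Pp[OF i j] by blast
      fix w assume w: "w \<in> tuples k (n + c)"
      have tw: "take n w \<in> tuples k n" "drop n w \<in> tuples k c" using tuples_take[OF w] tuples_drop2[OF w] .
      have "set (evo (CC i) (drop n w) (take n w)) \<subseteq> {..<k}"
        using evo_bound[of k q "take n w" "CC i" "drop n w"] wfi tuplesD[OF tw(1)] tuplesD[OF tw(2)] k0 by simp
      moreover have "P i j < length (evo (CC i) (drop n w) (take n w))" using pl tuplesD[OF tw(1)] by (simp add: evo_len)
      ultimately show "Ou i j w < k" unfolding Ou_def by (rule nth_bound)
      fix w' assume w': "w' \<in> tuples k (n + c)" and le: "list_all2 (\<le>) w w'"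
      have tw': "take n w' \<in> tuples k n" "drop n w' \<in> tuples k c" using tuples_take[OF w'] tuples_drop2[OF w'] .
      have "list_all2 (\<le>) (evo (CC i) (drop n w) (take n w)) (evo (CC i) (drop n w') (take n w'))"
        using evo_mono[of k q "take n w" "CC i" "drop n w" "take n w'" "drop n w'"] wfi
            tuplesD[OF tw(1)] tuplesD[OF tw(2)] tuplesD[OF tw'(1)] tuplesD[OF tw'(2)] k0
            list_all2_takeI[OF le] list_all2_dropI[OF le]
        by simp
      moreover have "P i j < length (evo (CC i) (drop n w) (take n w))" using pl tuplesD[OF tw(1)] by (simp add: evo_len)
      ultimately show "Ou i j w \<le> Ou i j w'" unfolding Ou_def by (rule list_all2_nthD)
    qed
    have Hmono: "\<forall>t<c. \<forall>r<q. monotone_fn k (s + n + t) (H t r)"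
    proof (intro allI impI)
      fix t r assume "t < c" "r < q"
      hence "monotone_fn k (s + (n + t)) (\<lambda>vs. SEL s (take s vs) (\<lambda>i. A i t r (drop s vs)))"
        using Amono k0 by (intro SEL_monotone_fn) auto
      thus "monotone_fn k (s + n + t) (H t r)" by (simp add: H_def[abs_def] add.assoc)
    qed
    have HOmono: "\<forall>j\<in>{1..m}. monotone_fn k (s + n + c) (HO j)"
    proof
      fix j assume "j \<in> {1..m}"
      hence "monotone_fn k (s + (n + c)) (\<lambda>vs. SEL s (take s vs) (\<lambda>i. Ou i j (drop s vs)))"
        using Omono k0 by (intro SEL_monotone_fn) auto
      thus "monotone_fn k (s + n + c) (HO j)" by (simp add: HO_def[abs_def] add.assoc)
    qed
    have wfD: "wf_circ k q (s + n) D" unfolding D_def using Hmono HOmono by (rule full_wf)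
    have ocD: "omega_count D = c" unfolding D_def by (rule full_oc)
    have lenD: "length D = c*(q+1) + m" unfolding D_def by (rule full_len)
    have idx: "s + n + c*(q+1) + (j-1) < s + n + length D" if "j \<in> {1..m}" for j
      using that lenD by auto
    have realD: "realizes k (s + n) \<omega> D (g ` {1..m})"
      unfolding realizes_def
    proof
      fix h assume "h \<in> g ` {1..m}"
      then obtain j where j: "j \<in> {1..m}" "h = g j" by blast
      show "\<exists>i<s + n + length D. \<forall>xs\<in>tuples k (s + n). eval_circ \<omega> D xs ! i = h xs"
        by (rule exI[of _ "s + n + c*(q+1) + (j-1)"]) (use idx[OF j(1)] in \<open>simp add: j(2) g_def\<close>)
    qed
    have IBle: "I_B k q \<omega> (s + n) (g ` {1..m}) \<le> c"
      unfolding I_B_def by (rule Least_le) (use wfD realD ocD in blast)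
    have gP: "in_Pk k (s + n) (g j)" if "j \<in> {1..m}" for j
      unfolding in_Pk_def
    proof
      fix vs assume vs: "vs \<in> tuples k (s + n)"
      have "set (eval_circ \<omega> D vs) \<subseteq> {..<k}" using eval_bound[of k q vs D \<omega>] wfD tuplesD[OF vs] assms(3)
        by simp
      moreover have "s + n + c*(q+1) + (j-1) < length (eval_circ \<omega> D vs)" using idx[OF that] tuplesD[OF vs] by (simp add: eval_len)
      ultimately show "g j vs < k" unfolding g_def by (rule nth_bound)
    qed
    have gC: "connector k s n (g j) (\<lambda>i. f i j)" if j: "j \<in> {1..m}" for j
      unfolding connector_def
    proof (intro ballI)
      fix i xs assume i: "i \<in> {1..s}" and xs: "xs \<in> tuples k n"
      let ?vs = "unit_tuple s i @ xs"
      let ?Y = "YY \<omega> s (s + n) q H ?vs"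
      have lx: "length xs = n" using xs by (simp add: tuples_def)
      have lvs: "length ?vs = s + n" using lx by simp
      have wfi: "wf_circ k q n (CC i)" using CC[OF i] by blast
      have tr: "take (omega_count (CC i)) (?Y c) = tom \<omega> (CC i) xs"
      proof (rule YY_track[OF lvs cnt[OF i]])
        fix t assume t: "t < c" "t < omega_count (CC i)"
        let ?L = "oargs (CC i) (?Y t) xs"
        have "?L ! t \<in> set ?L" using t by (simp add: oargs_len)
        hence lq: "length (?L ! t) = q" using oargs_qlen[of k q xs "CC i"] wfi lx by auto
        have "H t r (?vs @ ?Y t) = ?L ! t ! r" for r
          using i t(2) lx SEL_unit[OF i] by (simp add: H_def A_def)
        hence "map (\<lambda>r. H t r (?vs @ ?Y t)) [0..<q] = map (\<lambda>r. ?L ! t ! r) [0..<q]" by simp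
        also have "\<dots> = ?L ! t" using lq map_nth[of "?L ! t"] by simp
        finally show "map (\<lambda>r. H t r (?vs @ ?Y t)) [0..<q] = ?L ! t" .
      qed
      have "g j ?vs = HO j (?vs @ ?Y c)"
        unfolding g_def D_def using full_node[OF lvs j] by simp
      also have "\<dots> = Ou i j (xs @ ?Y c)" using SEL_unit[OF i] by (simp add: HO_def)
      also have "\<dots> = evo (CC i) (?Y c) xs ! P i j" using lx by (simp add: Ou_def)
      also have "evo (CC i) (?Y c) xs = evo (CC i) (tom \<omega> (CC i) xs) xs"
        using tr by (intro evo_prefix) (simp add: tom_len)
      also have "\<dots> = eval_circ \<omega> (CC i) xs" by (rule tom_evo)
      also have "eval_circ \<omega> (CC i) xs ! P i j = f i j xs" using Pp[OF i j] xs by blast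
      finally show "g j ?vs = f i j xs" .
    qed
    show ?thesis
      by (intro exI[of _ g] conjI ballI) (use gP gC IBle c_def in auto)
  qed
qed

end
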